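(* For every $K\in\mathbb{N}^+$, the set $\{[\sigma_1(\tfrac{w}{\pi+1}),\sigma_1(\tfrac{w}{\pi+2}),\dots,\sigma_1(\tfrac{w}{\pi+K})]^T: w\in\mathbb{R}\}\subseteq[0,1]^K$ is dense in $[0,1]^K$.
   Context: $\sigma_1:\mathbb{R}\to\mathbb{R}$ is the continuous triangular-wave function of period $2$: $\sigma_1(x)=|x|$ for $x\in[-1,1]$ and $\sigma_1(x+2)=\sigma_1(x)$ for all $x\in\mathbb{R}$. $\pi$ is the usual constant (ratio of a circle's circumference to its diameter). *)

theory Defs
  imports "HOL-Analysis.Analysis"
begin

text \<open>Triangular wave of period 2: equals |x| on [-1,1] and is 2-periodic.\<close>
definition sigma1 :: "real \<Rightarrow> real" where
  "sigma1 x = \<bar>x - 2 * of_int \<lfloor>(x + 1) / 2\<rfloor>\<bar>"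

lemma sigma1_abs: "-1 \<le> x \<Longrightarrow> x \<le> 1 \<Longrightarrow> sigma1 x = \<bar>x\<bar>"
proof -
  assume a: "-1 \<le> x" "x \<le> 1"
  show ?thesis
  proof (cases "x = 1")
    case True then show ?thesis by (simp add: sigma1_def)
  next
    case False
    with a have "\<lfloor>(x + 1) / 2\<rfloor> = 0" by (simp add: floor_eq_iff)
    then show ?thesis by (simp add: sigma1_def)
  qed
qed

lemma sigma1_periodic: "sigma1 (x + 2) = sigma1 x"
proof -
  have "(x + 2 + 1) / 2 = (x + 1) / 2 + 1" by simp
  then have "\<lfloor>(x + 2 + 1) / 2\<rfloor> = \<lfloor>(x + 1) / 2\<rfloor> + 1"
    by (metis floor_add_int of_int_1)
  then show ?thesis by (simp add: sigma1_def algebra_simps)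
qed

end

theory Submission
  imports Defs "HOL-Computational_Algebra.Formal_Power_Series" "HOL-Computational_Algebra.Polynomial_FPS"
    "HOL-Computational_Algebra.Polynomial" "HOL-Computational_Algebra.Primes"
    "HOL-Computational_Algebra.Fundamental_Theorem_Algebra" "HOL-Analysis.Kronecker_Approximation_Theorem"
begin

unbundle no vec_syntax
unbundle fps_syntax

definition subr :: "complex set \<Rightarrow> bool" where
  "subr A \<longleftrightarrow> 0 \<in> A \<and> 1 \<in> A \<and> (\<forall>x\<in>A. \<forall>y\<in>A. x + y \<in> A \<and> x * y \<in> A \<and> - x \<in> A)"

lemma subr_Ints: "subr \<int>" unfolding subr_def by auto
lemma subr_Rats: "subr \<rat>" unfolding subr_def by auto

lemma subr_sum: "subr A \<Longrightarrow> (\<And>i. i \<in> I \<Longrightarrow> f i \<in> A) \<Longrightarrow> sum f I \<in> A"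
  unfolding subr_def by (induction I rule: infinite_finite_induct) auto

lemma subr_add: "subr A \<Longrightarrow> x \<in> A \<Longrightarrow> y \<in> A \<Longrightarrow> x + y \<in> A"
  unfolding subr_def by auto
lemma subr_mult: "subr A \<Longrightarrow> x \<in> A \<Longrightarrow> y \<in> A \<Longrightarrow> x * y \<in> A"
  unfolding subr_def by auto
lemma subr_uminus: "subr A \<Longrightarrow> x \<in> A \<Longrightarrow> - x \<in> A"
  unfolding subr_def by auto
lemma subr_diff: "subr A \<Longrightarrow> x \<in> A \<Longrightarrow> y \<in> A \<Longrightarrow> x - y \<in> A"
  using subr_add[of A x "-y"] subr_uminus[of A y] by simp
lemma subr_of_nat: "subr A \<Longrightarrow> of_nat n \<in> A"
proof (induction n)
  case 0 then show ?case by (simp add: subr_def)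
next
  case (Suc n) then show ?case using subr_add[of A "of_nat n" 1] by (simp add: subr_def)
qed

definition fA :: "complex set \<Rightarrow> complex fps \<Rightarrow> bool" where
  "fA A f \<longleftrightarrow> (\<forall>n. f $ n \<in> A)"

lemma fA_mult: "subr A \<Longrightarrow> fA A f \<Longrightarrow> fA A g \<Longrightarrow> fA A (f * g)"
  unfolding fA_def fps_mult_nth by (auto intro!: subr_sum subr_mult)

lemma fA_deriv: "subr A \<Longrightarrow> fA A f \<Longrightarrow> fA A (fps_deriv f)"
  unfolding fA_def fps_deriv_nth by (metis subr_mult subr_of_nat)

lemma fA_inverse:
  assumes A: "subr A" and f: "fA A f" and f0: "inverse (f $ 0) \<in> A" "f $ 0 \<noteq> 0"
  shows "fA A (inverse f)"
  unfolding fA_def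
proof
  fix n show "inverse f $ n \<in> A"
  proof (induction n rule: less_induct)
    case (less n)
    show ?case
    proof (cases n)
      case 0 then show ?thesis using f0 by simp
    next
      case (Suc m)
      have "(inverse f * f) $ n = 0" using inverse_mult_eq_1[OF f0(2)] Suc by simp
      then have "(\<Sum>i = 0..n. inverse f $ i * f $ (n - i)) = 0" by (simp add: fps_mult_nth)
      then have "(\<Sum>i = 0..m. inverse f $ i * f $ (n - i)) + inverse f $ n * f $ 0 = 0"
        using Suc by simp
      then have eq: "inverse f $ n = - (\<Sum>i = 0..m. inverse f $ i * f $ (n - i)) * inverse (f $ 0)"
        using f0(2) by (simp add: field_simps eq_neg_iff_add_eq_0)
      have "(\<Sum>i = 0..m. inverse f $ i * f $ (n - i)) \<in> A"
        using f less Suc unfolding fA_def by (auto intro!: subr_sum subr_mult A)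
      then show ?thesis unfolding eq using A f0 by (intro subr_mult subr_uminus) auto
    qed
  qed
qed

lemma fA_ode:
  assumes F0: "F $ 0 \<in> \<rat>" and R: "fA \<rat> R" and eq: "fps_deriv F = F * R"
  shows "fA \<rat> F"
  unfolding fA_def
proof
  fix n show "F $ n \<in> \<rat>"
  proof (induction n rule: less_induct)
    case (less n)
    show ?case
    proof (cases n)
      case 0 then show ?thesis using F0 by simp
    next
      case (Suc m)
      have "fps_deriv F $ m = (F * R) $ m" using eq by simp
      then have "of_nat (Suc m) * F $ n = (\<Sum>i = 0..m. F $ i * R $ (m - i))"
        using Suc by (simp add: fps_mult_nth)
      then have eq2: "F $ n = (\<Sum>i = 0..m. F $ i * R $ (m - i)) / of_nat (Suc m)"
        by (simp add: field_simps del: of_nat_Suc)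
      have "(\<Sum>i = 0..m. F $ i * R $ (m - i)) \<in> \<rat>"
        using R less Suc unfolding fA_def by (auto intro!: subr_sum subr_mult subr_Rats)
      then show ?thesis unfolding eq2 by simp
    qed
  qed
qed

definition geo :: "complex \<Rightarrow> complex fps" where "geo c = Abs_fps (\<lambda>n. c ^ n)"

lemma geo_mult: "(1 - fps_const c * fps_X) * geo c = 1"
proof -
  have e: "(1 - fps_const c * fps_X) * geo c = geo c - fps_const c * (fps_X * geo c)"
    by (simp add: algebra_simps)
  show ?thesis unfolding e
  proof (rule fps_ext)
    fix n
    show "(geo c - fps_const c * (fps_X * geo c)) $ n = 1 $ n"
    proof (cases n)
      case 0 then show ?thesis by (simp add: geo_def fps_X_mult_nth)
    next
      case (Suc m) then show ?thesis by (simp add: geo_def fps_X_mult_nth)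
    qed
  qed
qed

definition Phi :: "'a set \<Rightarrow> ('a \<Rightarrow> complex) \<Rightarrow> complex fps" where
  "Phi I x = (\<Prod>i\<in>I. 1 - fps_const (x i) * fps_X)"

definition PS :: "'a set \<Rightarrow> ('a \<Rightarrow> complex) \<Rightarrow> nat \<Rightarrow> complex" where
  "PS I x k = (\<Sum>i\<in>I. x i ^ k)"

lemma Phi_deriv:
  assumes "finite I"
  shows "fps_deriv (Phi I x) = Phi I x * Abs_fps (\<lambda>n. - PS I x (Suc n))"
  using assms
proof (induction I rule: finite_induct)
  case empty
  have "Abs_fps (\<lambda>n. - PS {} x (Suc n)) = 0" by (rule fps_ext) (simp add: PS_def)
  then show ?case by (simp add: Phi_def)
next
  case (insert a I)
  define c where "c = x a"
  have T: "- fps_const c = (1 - fps_const c * fps_X) * Abs_fps (\<lambda>n. -(c ^ Suc n))"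
  proof -
    have "Abs_fps (\<lambda>n. -(c ^ Suc n)) = - fps_const c * geo c"
      by (rule fps_ext) (simp add: geo_def)
    moreover have "(1 - fps_const c * fps_X) * (- fps_const c * geo c) = - fps_const c * ((1 - fps_const c * fps_X) * geo c)"
      by algebra
    ultimately show ?thesis using geo_mult[of c] by simp
  qed
  have S: "Abs_fps (\<lambda>n. - PS (insert a I) x (Suc n)) = Abs_fps (\<lambda>n. -(c ^ Suc n)) + Abs_fps (\<lambda>n. - PS I x (Suc n))"
    using insert by (intro fps_ext) (simp add: PS_def c_def)
  have "fps_deriv (Phi (insert a I) x) = fps_deriv ((1 - fps_const c * fps_X) * Phi I x)"
    using insert by (simp add: Phi_def c_def)
  also have "\<dots> = - fps_const c * Phi I x + (1 - fps_const c * fps_X) * (Phi I x * Abs_fps (\<lambda>n. - PS I x (Suc n)))"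
    by (simp add: fps_deriv_mult insert.IH algebra_simps) (simp flip: fps_const_neg add: mult.commute)
  also have "\<dots> = (1 - fps_const c * fps_X) * Abs_fps (\<lambda>n. -(c ^ Suc n)) * Phi I x + (1 - fps_const c * fps_X) * (Phi I x * Abs_fps (\<lambda>n. - PS I x (Suc n)))"
    by (subst T) simp
  also have "\<dots> = ((1 - fps_const c * fps_X) * Phi I x) * (Abs_fps (\<lambda>n. -(c ^ Suc n)) + Abs_fps (\<lambda>n. - PS I x (Suc n)))"
    by algebra
  also have "\<dots> = Phi (insert a I) x * Abs_fps (\<lambda>n. - PS (insert a I) x (Suc n))"
    unfolding S using insert by (simp add: Phi_def c_def)
  finally show ?case .
qed

lemma Phi_0: "Phi I x $ 0 = 1"
  unfolding Phi_def by (induction I rule: infinite_finite_induct) auto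

lemma PS_from_Phi:
  assumes "finite I" "subr A" "fA A (Phi I x)"
  shows "PS I x (Suc n) \<in> A"
proof -
  have "fA A (inverse (Phi I x))" using assms by (intro fA_inverse) (auto simp: Phi_0 subr_def)
  then have "fA A (inverse (Phi I x) * fps_deriv (Phi I x))"
    using assms by (intro fA_mult fA_deriv)
  also have "inverse (Phi I x) * fps_deriv (Phi I x) = Abs_fps (\<lambda>n. - PS I x (Suc n))"
    unfolding Phi_deriv[OF assms(1)] using inverse_mult_eq_1[of "Phi I x"] by (simp add: Phi_0 mult.assoc[symmetric])
  finally have "- PS I x (Suc n) \<in> A" unfolding fA_def by auto
  then show ?thesis using subr_uminus[OF assms(2)] by fastforce
qed

lemma Phi_from_PS:
  assumes "finite I" "\<And>n. PS I x (Suc n) \<in> \<rat>"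
  shows "fA \<rat> (Phi I x)"
  by (rule fA_ode) (use assms in \<open>auto simp: Phi_0 Phi_deriv fA_def\<close>)

definition scl :: "complex \<Rightarrow> complex fps \<Rightarrow> complex fps" where
  "scl c f = Abs_fps (\<lambda>n. c ^ n * f $ n)"

lemma scl_mult: "scl c (f * g) = scl c f * scl c g"
proof (rule fps_ext)
  fix n
  have "c ^ n * (\<Sum>i = 0..n. f $ i * g $ (n - i)) = (\<Sum>i = 0..n. (c ^ i * f $ i) * (c ^ (n - i) * g $ (n - i)))"
    unfolding sum_distrib_left
  proof (rule sum.cong)
    fix i assume "i \<in> {0..n}"
    then have "c ^ n = c ^ i * c ^ (n - i)" by (simp flip: power_add)
    then show "c ^ n * (f $ i * g $ (n - i)) = c ^ i * f $ i * (c ^ (n - i) * g $ (n - i))"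
      by simp
  qed simp
  then show "scl c (f * g) $ n = (scl c f * scl c g) $ n"
    by (simp add: scl_def fps_mult_nth)
qed

lemma scl_1: "scl c 1 = 1"
  by (rule fps_ext) (simp add: scl_def)

lemma scl_add: "scl c (f + g) = scl c f + scl c g"
  by (rule fps_ext) (simp add: scl_def algebra_simps)

lemma scl_exp: "scl c (fps_exp 1) = fps_exp c"
  by (rule fps_ext) (simp add: scl_def)

definition H :: "complex fps" where "H = fps_exp 1 * inverse (1 + fps_exp 1)"

lemma H_eq: "(1 + fps_exp c) * scl c H = fps_exp c"
proof -
  have nz: "(1 + fps_exp (1::complex)) $ 0 \<noteq> 0" by simp
  have "(1 + fps_exp 1) * H = fps_exp 1"
    unfolding H_def using inverse_mult_eq_1[OF nz] by (simp add: ac_simps)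
  then have "scl c ((1 + fps_exp 1) * H) = fps_exp c" by (simp add: scl_exp)
  then show ?thesis by (simp add: scl_mult scl_add scl_1 scl_exp)
qed

lemma fA_add: "subr A \<Longrightarrow> fA A f \<Longrightarrow> fA A g \<Longrightarrow> fA A (f + g)"
  unfolding fA_def by (auto intro!: subr_add)

lemma H_rat: "fA \<rat> H"
proof -
  have E: "fA \<rat> (fps_exp 1)" unfolding fA_def fps_exp_nth by (metis Rats_divide Rats_power Rats_1 Rats_of_nat of_nat_fact)
  have one: "fA \<rat> 1" unfolding fA_def by simp
  have "fA \<rat> (inverse (1 + fps_exp 1))"
    by (rule fA_inverse) (use E one in \<open>auto intro!: fA_add subr_Rats\<close>)
  then show ?thesis unfolding H_def by (intro fA_mult subr_Rats E)
qed

definition Psi :: "'a set \<Rightarrow> ('a \<Rightarrow> complex) \<Rightarrow> complex fps" where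
  "Psi I x = (\<Prod>i\<in>I. 1 + fps_exp (x i))"

lemma Psi_deriv:
  assumes "finite I"
  shows "fps_deriv (Psi I x) = Psi I x * Abs_fps (\<lambda>n. PS I x (Suc n) * H $ n)"
  using assms
proof (induction I rule: finite_induct)
  case empty
  have "Abs_fps (\<lambda>n. PS {} x (Suc n) * H $ n) = 0" by (rule fps_ext) (simp add: PS_def)
  then show ?case by (simp add: Psi_def)
next
  case (insert a I)
  define c where "c = x a"
  define T where "T = Abs_fps (\<lambda>n. c ^ Suc n * H $ n)"
  have T: "fps_const c * fps_exp c = (1 + fps_exp c) * T"
  proof -
    have "T = fps_const c * scl c H" unfolding T_def scl_def by (rule fps_ext) simp
    then show ?thesis using H_eq[of c] by (metis mult.left_commute)
  qed
  have S: "Abs_fps (\<lambda>n. PS (insert a I) x (Suc n) * H $ n) = T + Abs_fps (\<lambda>n. PS I x (Suc n) * H $ n)"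
    using insert unfolding T_def by (intro fps_ext) (simp add: PS_def c_def algebra_simps)
  have "fps_deriv (Psi (insert a I) x) = fps_deriv ((1 + fps_exp c) * Psi I x)"
    using insert by (simp add: Psi_def c_def)
  also have "\<dots> = fps_const c * fps_exp c * Psi I x + (1 + fps_exp c) * (Psi I x * Abs_fps (\<lambda>n. PS I x (Suc n) * H $ n))"
    by (simp add: fps_deriv_mult insert.IH fps_exp_deriv)
  also have "\<dots> = (1 + fps_exp c) * T * Psi I x + (1 + fps_exp c) * (Psi I x * Abs_fps (\<lambda>n. PS I x (Suc n) * H $ n))"
    by (subst T) simp
  also have "\<dots> = ((1 + fps_exp c) * Psi I x) * (T + Abs_fps (\<lambda>n. PS I x (Suc n) * H $ n))"
    by algebra
  also have "\<dots> = Psi (insert a I) x * Abs_fps (\<lambda>n. PS (insert a I) x (Suc n) * H $ n)"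
    unfolding S using insert by (simp add: Psi_def c_def)
  finally show ?case .
qed

lemma fps_prod_nth_0: "(prod f I) $ 0 = (\<Prod>i\<in>I. f i $ 0)"
  by (induction I rule: infinite_finite_induct) auto

lemma Psi_rat:
  assumes "finite I" "\<And>n. PS I x (Suc n) \<in> \<rat>"
  shows "fA \<rat> (Psi I x)"
proof (rule fA_ode)
  show "Psi I x $ 0 \<in> \<rat>" unfolding Psi_def fps_prod_nth_0 by simp
  show "fA \<rat> (Abs_fps (\<lambda>n. PS I x (Suc n) * H $ n))"
    using assms(2) H_rat unfolding fA_def by auto
qed (rule Psi_deriv[OF assms(1)])

lemma prod_fps_exp: "finite X \<Longrightarrow> (\<Prod>i\<in>X. fps_exp (x i)) = fps_exp (sum x X :: complex)"
proof (induction X rule: finite_induct)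
  case empty
  have "fps_exp (0::complex) = 1" by (rule fps_ext) (subgoal_tac "n = 0 \<or> n > 0", auto)
  then show ?case by simp
next
  case (insert a X)
  then show ?case by (simp add: fps_exp_add_mult)
qed

lemma Psi_sum:
  assumes "finite I"
  shows "Psi I x = (\<Sum>X\<in>Pow I. fps_exp (sum x X))"
proof -
  have "Psi I x = (\<Prod>i\<in>I. fps_exp (x i) + (\<lambda>_. 1) i)" unfolding Psi_def by (simp add: add.commute)
  also have "\<dots> = (\<Sum>X\<in>Pow I. (\<Prod>i\<in>X. fps_exp (x i)) * (\<Prod>i\<in>I - X. 1))"
    by (rule prod_add[OF assms])
  also have "\<dots> = (\<Sum>X\<in>Pow I. fps_exp (sum x X))"
    using assms by (intro sum.cong refl) (auto simp: prod_fps_exp finite_subset)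
  finally show ?thesis .
qed

lemma subset_PS:
  assumes "finite I" "\<And>n. PS I x (Suc n) \<in> \<rat>"
  shows "(\<Sum>X\<in>Pow I. (sum x X) ^ n) \<in> \<rat>"
proof -
  have "Psi I x $ n \<in> \<rat>" using Psi_rat[OF assms] unfolding fA_def by auto
  also have "Psi I x $ n = (\<Sum>X\<in>Pow I. (sum x X) ^ n) / fact n"
    unfolding Psi_sum[OF assms(1)] fps_sum_nth by (simp add: sum_divide_distrib)
  finally have "(\<Sum>X\<in>Pow I. (sum x X) ^ n) / fact n * fact n \<in> \<rat>"
    by (intro Rats_mult) (auto, metis Rats_of_nat of_nat_fact)
  then show ?thesis by simp
qed

lemma higher_pderiv_pcompose_linear:
  "(pderiv ^^ i) (pcompose g [:0, a:]) = smult (a ^ i) (pcompose ((pderiv ^^ i) g) [:0, (a::complex):])"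
proof (induction i)
  case 0 then show ?case by simp
next
  case (Suc i)
  have "(pderiv ^^ Suc i) (pcompose g [:0, a:]) = pderiv ((pderiv ^^ i) (pcompose g [:0, a:]))" by simp
  also have "\<dots> = smult (a ^ i) (pcompose (pderiv ((pderiv ^^ i) g)) [:0, a:] * [:a:])"
    unfolding Suc pderiv_smult pderiv_pcompose by (simp add: pderiv_pCons)
  also have "\<dots> = smult (a ^ Suc i) (pcompose ((pderiv ^^ Suc i) g) [:0, a:])"
    by (simp add: mult.commute)
  finally show ?case .
qed

lemma pderiv_power_mult_aux:
  "pderiv (u ^ Suc k * g) = u ^ k * (u * pderiv g + smult (of_nat (Suc k)) (pderiv u * g))"
  by (simp only: pderiv_mult pderiv_power_Suc) (simp add: algebra_simps)

lemma higher_pderiv_root_power: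
  fixes a :: complex
  assumes "i \<le> m"
  shows "\<exists>g'. (pderiv ^^ i) ([:-a, 1:] ^ m * g) = [:-a, 1:] ^ (m - i) * g'"
  using assms
proof (induction i)
  case 0 then show ?case by auto
next
  case (Suc i)
  then obtain g' where g': "(pderiv ^^ i) ([:-a, 1:] ^ m * g) = [:-a, 1:] ^ (m - i) * g'" by auto
  define k where "k = m - Suc i"
  have k: "m - i = Suc k" using Suc.prems unfolding k_def by arith
  have "(pderiv ^^ Suc i) ([:-a, 1:] ^ m * g) = pderiv ([:-a, 1:] ^ Suc k * g')" using g' k by simp
  also have "\<dots> = [:-a, 1:] ^ k * ([:-a, 1:] * pderiv g' + smult (of_nat (Suc k)) (pderiv [:-a, 1:] * g'))"
    by (rule pderiv_power_mult_aux)
  finally have "(pderiv ^^ Suc i) ([:-a, 1:] ^ m * g) = [:-a, 1:] ^ k * ([:-a, 1:] * pderiv g' + smult (of_nat (Suc k)) (pderiv [:-a, 1:] * g'))" .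
  moreover have "m - Suc i = k" using k by arith
  ultimately show ?case by blast
qed

lemma higher_pderiv_root_zero:
  fixes a :: complex
  assumes "i < m"
  shows "poly ((pderiv ^^ i) ([:-a, 1:] ^ m * g)) a = 0"
proof -
  obtain g' where "(pderiv ^^ i) ([:-a, 1:] ^ m * g) = [:-a, 1:] ^ (m - i) * g'"
    using higher_pderiv_root_power[of i m a g] assms by auto
  then show ?thesis using assms by (simp add: poly_power)
qed

definition Fsum :: "complex poly \<Rightarrow> complex poly" where
  "Fsum f = (\<Sum>i\<le>degree f. (pderiv ^^ i) f)"

lemma Fsum_eq: "Fsum f = f + pderiv (Fsum f)"
proof -
  have z: "(pderiv ^^ Suc (degree f)) f = 0"
    by (rule poly_eqI) (simp only: coeff_higher_pderiv, simp add: coeff_eq_0)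
  have "pderiv (Fsum f) = (\<Sum>i\<le>degree f. (pderiv ^^ Suc i) f)"
    unfolding Fsum_def using higher_pderiv_sum[of 1 "\<lambda>i. (pderiv ^^ i) f" "{..degree f}"] by simp
  also have "\<dots> = (\<Sum>i\<le>Suc (degree f). (pderiv ^^ i) f) - f"
    by (subst sum.atMost_Suc_shift) simp
  also have "\<dots> = Fsum f - f" unfolding Fsum_def using z by simp
  finally show ?thesis by simp
qed

lemma Fsum_bound:
  fixes f :: "complex poly" and \<theta> :: complex
  assumes B: "\<And>z. z \<in> closed_segment 0 \<theta> \<Longrightarrow> norm (exp (- z) * poly f z) \<le> B"
  shows "norm (poly (Fsum f) \<theta> - exp \<theta> * poly (Fsum f) 0) \<le> exp (norm \<theta>) * B * norm \<theta>"
proof -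
  define G where "G z = exp (- z) * poly (Fsum f) z" for z
  have D: "(G has_field_derivative (- (exp (- z) * poly f z))) (at z within closed_segment 0 \<theta>)" for z
  proof -
    have "(G has_field_derivative (exp (- z) * (-1) * poly (Fsum f) z + exp (- z) * poly (pderiv (Fsum f)) z)) (at z)"
      unfolding G_def by (auto intro!: derivative_eq_intros poly_DERIV)
    moreover have "exp (- z) * (-1) * poly (Fsum f) z + exp (- z) * poly (pderiv (Fsum f)) z = - (exp (- z) * poly f z)"
      using arg_cong[OF Fsum_eq[of f], of "\<lambda>p. poly p z"] by (simp add: algebra_simps)
    ultimately show ?thesis by (metis has_field_derivative_at_within)
  qed
  have "norm (G \<theta> - G 0) \<le> B * norm (\<theta> - 0)"
    by (rule field_differentiable_bound[OF convex_closed_segment D]) (use B in auto)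
  moreover have "poly (Fsum f) \<theta> - exp \<theta> * poly (Fsum f) 0 = exp \<theta> * (G \<theta> - G 0)"
    unfolding G_def by (simp add: exp_minus field_simps)
  ultimately have "norm (poly (Fsum f) \<theta> - exp \<theta> * poly (Fsum f) 0) \<le> norm (exp \<theta>) * (B * norm \<theta>)"
    by (simp add: norm_mult mult_left_mono)
  also have "\<dots> \<le> exp (norm \<theta>) * (B * norm \<theta>)"
  proof (rule mult_right_mono[OF norm_exp])
    have "0 \<le> norm (G \<theta> - G 0)" by simp
    then show "0 \<le> B * norm \<theta>" using \<open>norm (G \<theta> - G 0) \<le> B * norm (\<theta> - 0)\<close>
      by (metis diff_zero order_trans)
  qed
  finally show ?thesis by (simp add: mult.assoc)
qed

definition ints_poly :: "complex poly \<Rightarrow> bool" where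
  "ints_poly g \<longleftrightarrow> (\<forall>k. coeff g k \<in> \<int>)"

lemma ints_poly_mult: "ints_poly g \<Longrightarrow> ints_poly h \<Longrightarrow> ints_poly (g * h)"
  unfolding ints_poly_def coeff_mult by (auto intro!: Ints_sum Ints_mult)

lemma ints_poly_power: "ints_poly g \<Longrightarrow> ints_poly (g ^ n)"
proof (induction n)
  case 0 then show ?case by (auto simp: ints_poly_def coeff_1)
next
  case (Suc n) then show ?case by (simp add: ints_poly_mult)
qed

lemma ints_poly_monom: "ints_poly (monom 1 n)"
  unfolding ints_poly_def by (simp add: coeff_monom)

definition pZ :: "nat \<Rightarrow> complex set" where
  "pZ p = {of_nat p * z | z. z \<in> \<int>}"

lemma pZ_sum: "(\<And>i. i \<in> I \<Longrightarrow> f i \<in> pZ p) \<Longrightarrow> sum f I \<in> pZ p"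
proof (induction I rule: infinite_finite_induct)
  case (infinite A) then show ?case by (auto simp: pZ_def intro: exI[of _ 0])
next
  case empty then show ?case by (auto simp: pZ_def intro: exI[of _ 0])
next
  case (insert x F)
  then obtain a b where "f x = of_nat p * a" "a \<in> \<int>" "sum f F = of_nat p * b" "b \<in> \<int>"
    unfolding pZ_def by force
  then show ?case using insert unfolding pZ_def by (auto intro!: exI[of _ "a + b"] simp: algebra_simps)
qed

lemma pZ_I: "z \<in> \<int> \<Longrightarrow> x = of_nat p * z \<Longrightarrow> x \<in> pZ p"
  unfolding pZ_def by auto

lemma higher_pderiv_zero_beyond: "degree f < i \<Longrightarrow> (pderiv ^^ i) f = 0"
  by (rule poly_eqI) (simp add: coeff_higher_pderiv coeff_eq_0)

lemma Fsum_alt: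
  assumes "degree f \<le> N"
  shows "Fsum f = (\<Sum>i\<le>N. (pderiv ^^ i) f)"
proof -
  have "(\<Sum>i\<le>N. (pderiv ^^ i) f) = (\<Sum>i\<le>degree f. (pderiv ^^ i) f) + (\<Sum>i\<in>{degree f<..N}. (pderiv ^^ i) f)"
    using assms by (subst sum.union_disjoint[symmetric]) (auto intro!: sum.cong)
  also have "(\<Sum>i\<in>{degree f<..N}. (pderiv ^^ i) f) = 0"
    by (intro sum.neutral) (auto intro: higher_pderiv_zero_beyond)
  finally show ?thesis by (simp add: Fsum_def)
qed

lemma poly_higher_pderiv_0: "poly ((pderiv ^^ i) h) 0 = fact i * coeff h i"
  by (simp add: poly_0_coeff_0 coeff_higher_pderiv pochhammer_fact)

lemma sum_poly_higher_pderiv: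
  fixes \<beta> :: "'a \<Rightarrow> complex"
  assumes h: "ints_poly h" and PS: "\<And>n. (\<Sum>j\<in>J. \<beta> j ^ n) \<in> \<int>"
  shows "\<exists>z\<in>\<int>. (\<Sum>j\<in>J. poly ((pderiv ^^ i) h) (\<beta> j)) = fact i * z"
proof -
  have "\<forall>k. \<exists>m. pochhammer (int (Suc k)) i = fact i * m"
  proof
    fix k :: nat
    show "\<exists>m. pochhammer (int (Suc k)) i = fact i * m"
      using fact_dvd_pochhammer[of i "int (Suc k)"] unfolding dvd_def by blast
  qed
  from choice[OF this] obtain m where m0: "\<forall>k. pochhammer (int (Suc k)) i = fact i * m k" by blast
  define g where "g = (pderiv ^^ i) h"
  have cg: "coeff g k = fact i * (of_int (m k) * coeff h (k + i))" for k
  proof -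
    have "coeff g k = pochhammer (of_nat (Suc k)) i * coeff h (k + i)"
      unfolding g_def coeff_higher_pderiv by simp
    also have "pochhammer (of_nat (Suc k) :: complex) i = of_int (pochhammer (int (Suc k)) i)"
      by (metis of_int_of_nat_eq pochhammer_of_int)
    also have "\<dots> = fact i * of_int (m k)" using m0 by simp
    finally show ?thesis by simp
  qed
  have "(\<Sum>j\<in>J. poly g (\<beta> j)) = (\<Sum>j\<in>J. \<Sum>k\<le>degree g. coeff g k * \<beta> j ^ k)"
    by (simp add: poly_altdef)
  also have "\<dots> = (\<Sum>k\<le>degree g. coeff g k * (\<Sum>j\<in>J. \<beta> j ^ k))"
    by (subst sum.swap) (simp add: sum_distrib_left)
  also have "\<dots> = fact i * (\<Sum>k\<le>degree g. of_int (m k) * coeff h (k + i) * (\<Sum>j\<in>J. \<beta> j ^ k))"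
    by (simp add: cg sum_distrib_left mult.assoc)
  finally have eq: "(\<Sum>j\<in>J. poly g (\<beta> j)) = fact i * (\<Sum>k\<le>degree g. of_int (m k) * coeff h (k + i) * (\<Sum>j\<in>J. \<beta> j ^ k))" .
  have "(\<Sum>k\<le>degree g. of_int (m k) * coeff h (k + i) * (\<Sum>j\<in>J. \<beta> j ^ k)) \<in> \<int>"
  proof (rule Ints_sum)
    fix k assume "k \<in> {..degree g}"
    show "of_int (m k) * coeff h (k + i) * (\<Sum>j\<in>J. \<beta> j ^ k) \<in> \<int>"
      using h PS[of k] unfolding ints_poly_def by (intro Ints_mult) auto
  qed
  then show ?thesis using eq unfolding g_def by blast
qed

lemma coef_lemma:
  assumes "p \<le> i" "c > 0" "p > 0"
  shows "(of_nat c ^ i / (fact (p - 1) * of_nat c ^ (p - 1)) * fact i :: complex) =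
         of_nat p * (of_nat c ^ (i - (p - 1)) * of_nat (fact i div fact p))"
proof -
  have f1: "fact i = fact p * (fact i div fact p :: nat)"
    using fact_dvd[OF assms(1), where 'a=nat] by (simp add: dvd_mult_div_cancel)
  have f2: "(fact p :: nat) = p * fact (p - 1)" using fact_reduce[OF assms(3), where 'a=nat] by simp
  have ie: "i = (p - 1) + (i - (p - 1))" using assms by arith
  have f3: "(of_nat c ^ i :: complex) = of_nat c ^ (p - 1) * of_nat c ^ (i - (p - 1))"
    using arg_cong[OF ie, of "\<lambda>k. (of_nat c :: complex) ^ k"] unfolding power_add .
  have "(fact i :: complex) = of_nat (fact i)" by simp
  also have "\<dots> = of_nat (p * fact (p - 1) * (fact i div fact p))"
    by (subst f1, subst f2) (rule refl)
  also have "\<dots> = of_nat p * fact (p - 1) * of_nat (fact i div fact p)"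
    by (simp only: of_nat_mult of_nat_fact)
  finally have f4: "(fact i :: complex) = of_nat p * fact (p - 1) * of_nat (fact i div fact p)" .
  have nz: "(fact (p - 1) :: complex) \<noteq> 0" "(of_nat c :: complex) ^ (p - 1) \<noteq> 0" using assms by auto
  define A where "A = (of_nat c :: complex) ^ (p - 1)"
  define B where "B = (fact (p - 1) :: complex)"
  have nz': "A \<noteq> 0" "B \<noteq> 0" using nz unfolding A_def B_def by auto
  have "(of_nat c ^ i / (fact (p - 1) * of_nat c ^ (p - 1)) * fact i :: complex) =
     A * of_nat c ^ (i - (p - 1)) / (B * A) * (of_nat p * B * of_nat (fact i div fact p))"
    unfolding f3 f4 A_def B_def ..
  also have "\<dots> = of_nat p * (of_nat c ^ (i - (p - 1)) * of_nat (fact i div fact p))"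
    using nz' by (simp add: field_simps)
  finally show ?thesis .
qed

definition hpol :: "complex poly \<Rightarrow> nat \<Rightarrow> complex poly" where
  "hpol R p = monom 1 (p - 1) * R ^ p"

definition fpol :: "complex poly \<Rightarrow> nat \<Rightarrow> nat \<Rightarrow> complex poly" where
  "fpol R c p = smult (1 / (fact (p - 1) * of_nat c ^ (p - 1))) (pcompose (hpol R p) [:0, of_nat c:])"

lemma poly_fpol_deriv:
  "poly ((pderiv ^^ i) (fpol R c p)) z =
     of_nat c ^ i / (fact (p - 1) * of_nat c ^ (p - 1)) * poly ((pderiv ^^ i) (hpol R p)) (of_nat c * z)"
  unfolding fpol_def higher_pderiv_smult higher_pderiv_pcompose_linear
  by (simp add: poly_pcompose) (metis mult.commute)

lemma zero_term:
  assumes R: "ints_poly R" and r: "coeff R 0 = of_int r" and c: "c > 0" and p: "p > 0"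
  shows "poly ((pderiv ^^ i) (fpol R c p)) 0 - (if i = p - 1 then of_int r ^ p else 0) \<in> pZ p"
proof -
  have t: "poly ((pderiv ^^ i) (fpol R c p)) 0 = of_nat c ^ i / (fact (p - 1) * of_nat c ^ (p - 1)) * (fact i * coeff (hpol R p) i)"
    unfolding poly_fpol_deriv by (simp add: poly_higher_pderiv_0)
  have ch: "coeff (hpol R p) i = (if i < p - 1 then 0 else coeff (R ^ p) (i - (p - 1)))"
    unfolding hpol_def coeff_monom_mult by simp
  consider "i < p - 1" | "i = p - 1" | "p \<le> i" by linarith
  then show ?thesis
  proof cases
    case 1 then show ?thesis unfolding t ch pZ_def by (auto intro!: exI[of _ 0])
  next
    case 2
    have "poly ((pderiv ^^ i) (fpol R c p)) 0 = of_int r ^ p"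
      unfolding t ch using 2 c by (simp add: coeff_0_power r)
    then show ?thesis using 2 unfolding pZ_def by (auto intro!: exI[of _ 0])
  next
    case 3
    have a: "coeff (R ^ p) (i - (p - 1)) \<in> \<int>" using ints_poly_power[OF R] unfolding ints_poly_def by blast
    have "poly ((pderiv ^^ i) (fpol R c p)) 0 = (of_nat c ^ i / (fact (p - 1) * of_nat c ^ (p - 1)) * fact i) * coeff (R ^ p) (i - (p - 1))"
      unfolding t ch using 3 p by simp
    also have "\<dots> = of_nat p * (of_nat c ^ (i - (p - 1)) * of_nat (fact i div fact p) * coeff (R ^ p) (i - (p - 1)))"
      unfolding coef_lemma[OF 3 c p] by simp
    finally have e: "poly ((pderiv ^^ i) (fpol R c p)) 0 = of_nat p * (of_nat c ^ (i - (p - 1)) * of_nat (fact i div fact p) * coeff (R ^ p) (i - (p - 1)))" .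
    have XZ: "of_nat c ^ (i - (p - 1)) * of_nat (fact i div fact p) * coeff (R ^ p) (i - (p - 1)) \<in> \<int>"
      using a by (intro Ints_mult Ints_power Ints_of_nat) auto
    have "i \<noteq> p - 1" using 3 p by arith
    then have "poly ((pderiv ^^ i) (fpol R c p)) 0 - (if i = p - 1 then of_int r ^ p else 0) = of_nat p * (of_nat c ^ (i - (p - 1)) * of_nat (fact i div fact p) * coeff (R ^ p) (i - (p - 1)))"
      using e by simp
    then show ?thesis by (rule pZ_I[OF XZ])
  qed
qed

lemma theta_term:
  fixes \<beta> :: "'a \<Rightarrow> complex"
  assumes J: "finite J" and R: "R = (\<Prod>j\<in>J. [:-\<beta> j, 1:])" "ints_poly R"
    and PS: "\<And>n. (\<Sum>j\<in>J. \<beta> j ^ n) \<in> \<int>" and c: "c > 0" and p: "p > 0"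
  shows "(\<Sum>j\<in>J. poly ((pderiv ^^ i) (fpol R c p)) (\<beta> j / of_nat c)) \<in> pZ p"
proof -
  have eq: "(\<Sum>j\<in>J. poly ((pderiv ^^ i) (fpol R c p)) (\<beta> j / of_nat c)) =
      of_nat c ^ i / (fact (p - 1) * of_nat c ^ (p - 1)) * (\<Sum>j\<in>J. poly ((pderiv ^^ i) (hpol R p)) (\<beta> j))"
    unfolding poly_fpol_deriv sum_distrib_left using c by simp
  show ?thesis
  proof (cases "i < p")
    case True
    have "poly ((pderiv ^^ i) (hpol R p)) (\<beta> j) = 0" if j: "j \<in> J" for j
    proof -
      have "R = [:-\<beta> j, 1:] * (\<Prod>l\<in>J - {j}. [:-\<beta> l, 1:])"
        unfolding R(1) using J j by (simp add: prod.remove)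
      then have "hpol R p = monom 1 (p - 1) * ([:-\<beta> j, 1:] * (\<Prod>l\<in>J - {j}. [:-\<beta> l, 1:])) ^ p"
        unfolding hpol_def by simp
      also have "\<dots> = [:-\<beta> j, 1:] ^ p * (monom 1 (p - 1) * (\<Prod>l\<in>J - {j}. [:-\<beta> l, 1:]) ^ p)"
        by (simp only: power_mult_distrib mult.commute mult.left_commute)
      finally have "hpol R p = [:-\<beta> j, 1:] ^ p * (monom 1 (p - 1) * (\<Prod>l\<in>J - {j}. [:-\<beta> l, 1:]) ^ p)" .
      then show ?thesis using higher_pderiv_root_zero[OF True] by simp
    qed
    then show ?thesis unfolding eq pZ_def by (auto intro!: exI[of _ 0])
  next
    case False
    then have ip: "p \<le> i" by simp
    have hi: "ints_poly (hpol R p)" unfolding hpol_def by (intro ints_poly_mult ints_poly_power ints_poly_monom R(2))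
    obtain z where z: "z \<in> \<int>" "(\<Sum>j\<in>J. poly ((pderiv ^^ i) (hpol R p)) (\<beta> j)) = fact i * z"
      using sum_poly_higher_pderiv[OF hi PS] by blast
    have "(\<Sum>j\<in>J. poly ((pderiv ^^ i) (fpol R c p)) (\<beta> j / of_nat c)) =
       (of_nat c ^ i / (fact (p - 1) * of_nat c ^ (p - 1)) * fact i) * z"
      unfolding eq z(2) by simp
    also have "\<dots> = of_nat p * (of_nat c ^ (i - (p - 1)) * of_nat (fact i div fact p) * z)"
      unfolding coef_lemma[OF ip c p] by simp
    finally have "(\<Sum>j\<in>J. poly ((pderiv ^^ i) (fpol R c p)) (\<beta> j / of_nat c)) = of_nat p * (of_nat c ^ (i - (p - 1)) * of_nat (fact i div fact p) * z)" .
    moreover have XZ: "of_nat c ^ (i - (p - 1)) * of_nat (fact i div fact p) * z \<in> \<int>"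
      using z(1) by (intro Ints_mult Ints_power Ints_of_nat) auto
    ultimately show ?thesis by (intro pZ_I[OF XZ]) simp
  qed
qed

lemma fact_limit:
  fixes E K :: real
  shows "\<exists>P0. \<forall>n\<ge>P0. K * E * (E ^ n / fact n) < 1"
proof -
  have "summable (\<lambda>n. inverse (fact n) * E ^ n)" by (rule summable_exp)
  then have "(\<lambda>n. inverse (fact n) * E ^ n) \<longlonglongrightarrow> 0" by (rule summable_LIMSEQ_zero)
  then have "(\<lambda>n. K * E * (inverse (fact n) * E ^ n)) \<longlonglongrightarrow> K * E * 0" by (intro tendsto_intros)
  then have "eventually (\<lambda>n. K * E * (inverse (fact n) * E ^ n) < 1) sequentially"
    by (intro order_tendstoD(2)) auto
  then obtain P0 where "\<forall>n\<ge>P0. K * E * (inverse (fact n) * E ^ n) < 1"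
    unfolding eventually_sequentially by blast
  then show ?thesis by (auto simp: field_simps)
qed

lemma bound_f:
  fixes \<beta> :: "'a \<Rightarrow> complex"
  assumes J: "finite J" and R: "R = (\<Prod>j\<in>J. [:-\<beta> j, 1:])" and c: "c > 0" and p: "p > 0"
    and j: "j \<in> J" and M: "M \<ge> 1" "norm (\<beta> j) \<le> M" "(\<Prod>l\<in>J. norm (\<beta> j) + norm (\<beta> l)) \<le> M"
    and z: "z \<in> closed_segment 0 (\<beta> j / of_nat c)"
  shows "norm (exp (- z) * poly (fpol R c p) z) \<le> exp (norm (\<beta> j / of_nat c)) * ((M ^ 2) ^ p / fact (p - 1))"
proof -
  have nz: "norm z \<le> norm (\<beta> j / of_nat c)" using dist_in_closed_segment[OF z] by (simp add: dist_norm)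
  have e: "norm (exp (- z)) \<le> exp (norm (\<beta> j / of_nat c))"
    using norm_exp[of "-z"] nz by (metis norm_minus_cancel order_trans exp_le_cancel_iff)
  define w where "w = of_nat c * z"
  have nw: "norm w \<le> norm (\<beta> j)"
    using nz c unfolding w_def by (simp add: norm_mult norm_divide field_simps)
  have pR: "norm (poly R w) \<le> M"
  proof -
    have "norm (poly R w) = (\<Prod>l\<in>J. norm (w - \<beta> l))" unfolding R by (simp add: poly_prod prod_norm)
    also have "\<dots> \<le> (\<Prod>l\<in>J. norm (\<beta> j) + norm (\<beta> l))"
      by (intro prod_mono) (use nw in \<open>auto intro: order_trans[OF norm_triangle_ineq4]\<close>)
    finally show ?thesis using M(3) by linarith
  qed
  have ph: "norm (poly (hpol R p) w) \<le> (M ^ 2) ^ p"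
  proof -
    have "norm (poly (hpol R p) w) = norm w ^ (p - 1) * norm (poly R w) ^ p"
      unfolding hpol_def by (simp add: poly_monom norm_mult norm_power)
    also have "\<dots> \<le> M ^ (p - 1) * M ^ p"
      using nw M pR by (intro mult_mono power_mono) auto
    also have "\<dots> \<le> M ^ p * M ^ p"
      using M(1) p by (intro mult_right_mono power_increasing) auto
    also have "\<dots> = (M ^ 2) ^ p" by (simp add: power_mult_distrib[symmetric] power2_eq_square)
    finally show ?thesis .
  qed
  have pf: "norm (poly (fpol R c p) z) \<le> (M ^ 2) ^ p / fact (p - 1)"
  proof -
    have "norm (poly (fpol R c p) z) = norm (poly (hpol R p) w) / (fact (p - 1) * of_nat c ^ (p - 1))"
      unfolding fpol_def w_def by (simp add: poly_pcompose norm_mult norm_divide norm_power mult.commute)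
    also have "\<dots> \<le> norm (poly (hpol R p) w) / fact (p - 1)"
    proof (rule divide_left_mono)
      have c1: "(1::real) \<le> of_nat c ^ (p - 1)" using c by simp
      show "fact (p - 1) \<le> fact (p - 1) * (of_nat c ^ (p - 1) :: real)"
        using mult_left_mono[OF c1, of "fact (p - 1)"] by simp
    qed (use c in auto)
    also have "\<dots> \<le> (M ^ 2) ^ p / fact (p - 1)"
      using ph by (intro divide_right_mono) auto
    finally show ?thesis .
  qed
  have "norm (exp (- z) * poly (fpol R c p) z) = norm (exp (- z)) * norm (poly (fpol R c p) z)"
    by (simp add: norm_mult)
  also have "\<dots> \<le> exp (norm (\<beta> j / of_nat c)) * ((M ^ 2) ^ p / fact (p - 1))"
    using e pf by (intro mult_mono) auto
  finally show ?thesis .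
qed

lemma hermite:
  fixes \<beta> :: "'a \<Rightarrow> complex" and c q :: nat
  assumes J: "finite J" and nz: "\<And>j. j \<in> J \<Longrightarrow> \<beta> j \<noteq> 0" and c: "c > 0" and q: "q > 0"
    and eq: "(\<Sum>j\<in>J. exp (\<beta> j / of_nat c)) + of_nat q = 0"
    and PS: "\<And>n. (\<Sum>j\<in>J. \<beta> j ^ n) \<in> \<int>"
    and Rint: "ints_poly (\<Prod>j\<in>J. [:-\<beta> j, 1:])"
  shows False
proof -
  define R where "R = (\<Prod>j\<in>J. [:-\<beta> j, 1:])"
  have RI: "ints_poly R" using Rint unfolding R_def .
  have "coeff R 0 \<in> \<int>" using RI unfolding ints_poly_def by blast
  then obtain r where r: "coeff R 0 = of_int r" by (auto elim: Ints_cases)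
  have "coeff R 0 = (\<Prod>j\<in>J. - \<beta> j)" unfolding R_def poly_0_coeff_0[symmetric] by (simp add: poly_prod)
  then have "coeff R 0 \<noteq> 0" using nz J by simp
  then have r0: "r \<noteq> 0" using r by auto
  define \<theta> where "\<theta> j = \<beta> j / of_nat c" for j
  define M where "M = 1 + (\<Sum>j\<in>J. norm (\<beta> j) + (\<Prod>l\<in>J. norm (\<beta> j) + norm (\<beta> l)))"
  define K where "K = (\<Sum>j\<in>J. exp (norm (\<theta> j)) * exp (norm (\<theta> j)) * norm (\<theta> j))"
  have Mj: "norm (\<beta> j) \<le> M \<and> (\<Prod>l\<in>J. norm (\<beta> j) + norm (\<beta> l)) \<le> M" if "j \<in> J" for j
  proof -
    have "norm (\<beta> j) + (\<Prod>l\<in>J. norm (\<beta> j) + norm (\<beta> l)) \<le> (\<Sum>j\<in>J. norm (\<beta> j) + (\<Prod>l\<in>J. norm (\<beta> j) + norm (\<beta> l)))"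
      using that J by (intro member_le_sum) (auto intro!: add_nonneg_nonneg prod_nonneg)
    moreover have "0 \<le> (\<Prod>l\<in>J. norm (\<beta> j) + norm (\<beta> l))" by (auto intro!: prod_nonneg)
    ultimately show ?thesis unfolding M_def using norm_ge_zero[of "\<beta> j"] by (intro conjI; linarith)
  qed
  have M1: "M \<ge> 1" unfolding M_def by (auto intro!: sum_nonneg add_nonneg_nonneg prod_nonneg)
  obtain P0 where P0: "\<And>n. n \<ge> P0 \<Longrightarrow> K * (M ^ 2) * ((M ^ 2) ^ n / fact n) < 1"
    using fact_limit[of K "M ^ 2"] by blast
  obtain p where p: "prime p" "P0 + q + nat \<bar>r\<bar> + 1 < p" using bigger_prime by blast
  have p0: "p > 0" using p by auto
  define f where "f = fpol R c p"
  define N where "N = max (degree f) p"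
  have FN: "Fsum f = (\<Sum>i\<le>N. (pderiv ^^ i) f)" by (rule Fsum_alt) (simp add: N_def)
  have F0: "poly (Fsum f) 0 - of_int r ^ p \<in> pZ p"
  proof -
    have "poly (Fsum f) 0 - of_int r ^ p = (\<Sum>i\<le>N. poly ((pderiv ^^ i) f) 0 - (if i = p - 1 then of_int r ^ p else 0))"
      unfolding FN poly_sum sum_subtractf using p0 by (simp add: N_def)
    also have "\<dots> \<in> pZ p"
      by (rule pZ_sum) (unfold f_def, rule zero_term[OF RI r c p0])
    finally show ?thesis .
  qed
  have Fth: "(\<Sum>j\<in>J. poly (Fsum f) (\<theta> j)) \<in> pZ p"
  proof -
    have "(\<Sum>j\<in>J. poly (Fsum f) (\<theta> j)) = (\<Sum>i\<le>N. \<Sum>j\<in>J. poly ((pderiv ^^ i) f) (\<beta> j / of_nat c))"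
      unfolding FN poly_sum \<theta>_def by (rule sum.swap)
    also have "\<dots> \<in> pZ p"
      by (rule pZ_sum) (unfold f_def, rule theta_term[OF J R_def RI PS c p0])
    finally show ?thesis .
  qed
  define T where "T = of_nat q * poly (Fsum f) 0 + (\<Sum>j\<in>J. poly (Fsum f) (\<theta> j))"
  obtain a b where ab: "poly (Fsum f) 0 - of_int r ^ p = of_nat p * a" "a \<in> \<int>"
    "(\<Sum>j\<in>J. poly (Fsum f) (\<theta> j)) = of_nat p * b" "b \<in> \<int>"
    using F0 Fth unfolding pZ_def by blast
  obtain a' where a': "a = of_int a'" using ab(2) by (auto elim: Ints_cases)
  obtain b' where b': "b = of_int b'" using ab(4) by (auto elim: Ints_cases)
  define k where "k = int q * r ^ p + int p * (int q * a' + b')"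
  have Tk: "T = of_int k"
  proof -
    have "poly (Fsum f) 0 = of_int r ^ p + of_nat p * a" using ab(1) by (simp add: algebra_simps)
    then show ?thesis unfolding T_def k_def ab(3) a' b' by (simp add: algebra_simps)
  qed
  have k0: "k \<noteq> 0"
  proof
    assume "k = 0"
    then have "int p dvd int q * r ^ p" unfolding k_def
      by (metis add.commute add_0 dvd_triv_left dvd_add_right_iff)
    moreover have "prime (int p)" using p by simp
    ultimately have "int p dvd int q \<or> int p dvd r"
      by (metis prime_dvd_mult_iff prime_dvd_power)
    moreover have "\<not> int p dvd int q"
    proof
      assume "int p dvd int q"
      then have "p dvd q" by simp
      then have "p \<le> q" using q by (auto dest: dvd_imp_le)
      then show False using p by linarith
    qed
    moreover have "\<not> int p dvd r"
    proof
      assume "int p dvd r"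
      then have "int p dvd \<bar>r\<bar>" by simp
      moreover have "0 < \<bar>r\<bar>" using r0 by simp
      ultimately have "int p \<le> \<bar>r\<bar>" by (rule zdvd_imp_le)
      then show False using p by linarith
    qed
    ultimately show False by blast
  qed
  have T1: "norm T \<ge> 1"
  proof -
    have "norm T = \<bar>real_of_int k\<bar>" unfolding Tk by (simp only: norm_of_int)
    then show ?thesis using k0 by linarith
  qed
  have Tsum: "T = (\<Sum>j\<in>J. poly (Fsum f) (\<theta> j) - exp (\<theta> j) * poly (Fsum f) 0)"
  proof -
    have "(\<Sum>j\<in>J. exp (\<theta> j)) = - of_nat q" using eq unfolding \<theta>_def by (simp add: eq_neg_iff_add_eq_0)
    then show ?thesis unfolding T_def sum_subtractf sum_distrib_right[symmetric] by simp
  qed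
  have "norm T \<le> (\<Sum>j\<in>J. norm (poly (Fsum f) (\<theta> j) - exp (\<theta> j) * poly (Fsum f) 0))"
    unfolding Tsum by (rule norm_sum)
  also have "\<dots> \<le> (\<Sum>j\<in>J. exp (norm (\<theta> j)) * (exp (norm (\<theta> j)) * ((M ^ 2) ^ p / fact (p - 1))) * norm (\<theta> j))"
  proof (rule sum_mono)
    fix j assume j: "j \<in> J"
    show "norm (poly (Fsum f) (\<theta> j) - exp (\<theta> j) * poly (Fsum f) 0) \<le> exp (norm (\<theta> j)) * (exp (norm (\<theta> j)) * ((M ^ 2) ^ p / fact (p - 1))) * norm (\<theta> j)"
      by (rule Fsum_bound) (unfold f_def \<theta>_def, rule bound_f[OF J R_def c p0 j M1 conjunct1[OF Mj[OF j]] conjunct2[OF Mj[OF j]]], simp)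
  qed
  also have "\<dots> = K * ((M ^ 2) ^ p / fact (p - 1))"
    unfolding K_def sum_distrib_right by (intro sum.cong) auto
  also have "\<dots> = K * (M ^ 2) * ((M ^ 2) ^ (p - 1) / fact (p - 1))"
  proof -
    have "(M ^ 2) ^ p = M ^ 2 * (M ^ 2) ^ (p - 1)" using p0 by (metis Suc_diff_1 power_Suc)
    then show ?thesis by simp
  qed
  also have "\<dots> < 1" using P0[of "p - 1"] p by simp
  finally show False using T1 by simp
qed

lemma reflect_lin: "(b::complex) \<noteq> 0 \<Longrightarrow> reflect_poly [:a, b:] = [:b, a:]"
  by (rule poly_eqI) (auto simp: coeff_reflect_poly coeff_pCons split: nat.split)

lemma fps_of_lin: "fps_of_poly [:1, - a:] = 1 - fps_const (a::complex) * fps_X"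
  by (rule fps_ext) (auto simp: coeff_pCons split: nat.split)

lemma Rats_denom: "(x::complex) \<in> \<rat> \<Longrightarrow> \<exists>d::nat. d > 0 \<and> of_nat d * x \<in> \<int>"
proof -
  assume "x \<in> \<rat>"
  then obtain a b where ab: "b > 0" "x = of_int a / of_int b" by (auto elim: Rats_cases')
  then have "of_nat (nat b) * x = of_int a" by simp
  then show ?thesis using ab by (intro exI[of _ "nat b"]) auto
qed

lemma i_pow_sum: "\<i> ^ k + (- \<i>) ^ k \<in> \<rat>"
proof -
  obtain m where "k = 2 * m \<or> k = 2 * m + 1" by (metis odd_two_times_div_two_succ even_two_times_div_two)
  then show ?thesis
  proof
    assume "k = 2 * m"
    then have "\<i> ^ k + (- \<i>) ^ k = 2 * (-1) ^ m" by (simp add: power_mult)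
    then show ?thesis by simp
  next
    assume "k = 2 * m + 1"
    then have "\<i> ^ k + (- \<i>) ^ k = 0" by (simp add: power_mult)
    then show ?thesis by simp
  qed
qed

theorem pi_transc:
  fixes P :: "complex poly"
  assumes P0: "P \<noteq> 0" and Pq: "\<And>k. coeff P k \<in> \<rat>"
  shows "poly P (of_real pi) \<noteq> 0"
proof
  assume root0: "poly P (of_real pi) = 0"
  define d where "d = degree P"
  obtain root where fac: "smult (lead_coeff P) (\<Prod>i<d. [:-root i, 1:]) = P"
    using complex_poly_decompose' unfolding d_def by blast
  define Q where "Q = (\<Prod>i<d. [:-root i, 1:])"
  have lc: "lead_coeff P \<noteq> 0" "lead_coeff P \<in> \<rat>" using P0 Pq by auto
  have Qc: "coeff Q k \<in> \<rat>" for k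
  proof -
    have "coeff P k = lead_coeff P * coeff Q k" using fac unfolding Q_def by (metis coeff_smult)
    then have "coeff Q k = coeff P k / lead_coeff P" using lc by simp
    then show ?thesis using Pq lc by simp
  qed
  have "lead_coeff P * (\<Prod>i<d. of_real pi - root i) = 0"
    using root0 arg_cong[OF fac, of "\<lambda>p. poly p (of_real pi)"] by (simp add: poly_prod)
  then obtain i0 where i0: "i0 < d" "root i0 = of_real pi" using lc by auto
  have refQ: "reflect_poly Q = (\<Prod>i<d. [:1, - root i:])"
    unfolding Q_def reflect_poly_prod by (intro prod.cong refl) (simp add: reflect_lin)
  have "Phi {..<d} root = fps_of_poly (reflect_poly Q)"
    unfolding refQ fps_of_poly_prod Phi_def by (simp add: fps_of_lin)
  then have "fA \<rat> (Phi {..<d} root)"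
    unfolding fA_def using Qc by (auto simp: coeff_reflect_poly)
  then have PSr: "PS {..<d} root (Suc n) \<in> \<rat>" for n
    by (intro PS_from_Phi subr_Rats) auto
  define I where "I = {..<d} \<times> (UNIV :: bool set)"
  define \<alpha> where "\<alpha> = (\<lambda>(i, b). (if b then \<i> else - \<i>) * root i)"
  have finI: "finite I" unfolding I_def by simp
  have PSa: "PS I \<alpha> (Suc n) \<in> \<rat>" for n
  proof -
    have "PS I \<alpha> (Suc n) = (\<Sum>i<d. \<Sum>b\<in>UNIV. \<alpha> (i, b) ^ Suc n)"
      unfolding PS_def I_def by (simp add: sum.cartesian_product)
    also have "\<dots> = (\<i> ^ Suc n + (- \<i>) ^ Suc n) * PS {..<d} root (Suc n)"
      unfolding PS_def sum_distrib_left by (intro sum.cong refl) (simp add: UNIV_bool \<alpha>_def power_mult_distrib algebra_simps)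
    finally show ?thesis using i_pow_sum[of "Suc n"] PSr[of n] by (simp only: Rats_mult)
  qed
  have SS: "(\<Sum>X\<in>Pow I. (sum \<alpha> X) ^ n) \<in> \<rat>" for n by (rule subset_PS[OF finI PSa])
  have prod0: "(\<Prod>x\<in>I. exp (\<alpha> x) + 1) = 0"
  proof -
    have "(i0, True) \<in> I" using i0 unfolding I_def by simp
    moreover have "exp (\<alpha> (i0, True)) + 1 = 0"
      using i0 unfolding \<alpha>_def by (simp add: mult.commute exp_pi_i)
    ultimately show ?thesis using finI by (metis prod_zero_iff)
  qed
  have expsum: "(\<Sum>X\<in>Pow I. exp (sum \<alpha> X)) = 0"
  proof -
    have "(\<Prod>x\<in>I. exp (\<alpha> x) + 1) = (\<Sum>X\<in>Pow I. (\<Prod>x\<in>X. exp (\<alpha> x)) * (\<Prod>x\<in>I - X. 1))"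
      by (rule prod_add[OF finI])
    also have "\<dots> = (\<Sum>X\<in>Pow I. exp (sum \<alpha> X))"
      using finI by (intro sum.cong refl) (auto simp: exp_sum finite_subset)
    finally show ?thesis using prod0 by simp
  qed
  define \<theta> where "\<theta> X = sum \<alpha> X" for X
  define J where "J = {X \<in> Pow I. \<theta> X \<noteq> 0}"
  define q where "q = card (Pow I - J)"
  have finJ: "finite J" unfolding J_def using finI by simp
  have JI: "J \<subseteq> Pow I" unfolding J_def by auto
  have q0: "q > 0"
  proof -
    have "{} \<in> Pow I - J" unfolding J_def \<theta>_def by simp
    then show ?thesis unfolding q_def using finI by (auto simp: card_gt_0_iff)
  qed
  have eqJ: "(\<Sum>X\<in>J. exp (\<theta> X)) + of_nat q = 0"
  proof -
    have "(\<Sum>X\<in>Pow I. exp (\<theta> X)) = (\<Sum>X\<in>J. exp (\<theta> X)) + (\<Sum>X\<in>Pow I - J. exp (\<theta> X))"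
      using finI JI by (metis add.commute finite_Pow_iff sum.subset_diff)
    also have "(\<Sum>X\<in>Pow I - J. exp (\<theta> X)) = (\<Sum>X\<in>Pow I - J. 1)"
      by (intro sum.cong refl) (auto simp: J_def)
    also have "\<dots> = of_nat q" unfolding q_def by simp
    finally show ?thesis using expsum unfolding \<theta>_def by simp
  qed
  have PSt: "PS J \<theta> (Suc n) \<in> \<rat>" for n
  proof -
    have "PS J \<theta> (Suc n) = (\<Sum>X\<in>Pow I. (sum \<alpha> X) ^ Suc n)"
      unfolding PS_def \<theta>_def using finI JI by (intro sum.mono_neutral_left) (auto simp: J_def \<theta>_def)
    then show ?thesis using SS[of "Suc n"] by (simp only:)
  qed
  have fPhi: "fA \<rat> (Phi J \<theta>)" by (rule Phi_from_PS[OF finJ PSt])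
  define \<Phi> where "\<Phi> = (\<Prod>X\<in>J. [:1, - \<theta> X:])"
  have fpP: "fps_of_poly \<Phi> = Phi J \<theta>"
    unfolding \<Phi>_def fps_of_poly_prod Phi_def by (simp add: fps_of_lin)
  have cP: "coeff \<Phi> k \<in> \<rat>" for k using fPhi unfolding fA_def fpP[symmetric] by simp
  have "\<forall>k. \<exists>dk::nat. dk > 0 \<and> of_nat dk * coeff \<Phi> k \<in> \<int>" using Rats_denom cP by blast
  from choice[OF this] obtain dd where dd: "\<And>k. dd k > 0" "\<And>k. of_nat (dd k) * coeff \<Phi> k \<in> \<int>" by blast
  define c where "c = (\<Prod>k\<le>degree \<Phi>. dd k)"
  have c0: "c > 0" unfolding c_def using dd(1) by (simp add: prod_pos)
  have coeff0: "coeff \<Phi> 0 = 1" unfolding poly_0_coeff_0[symmetric] \<Phi>_def by (simp add: poly_prod)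
  have cint: "of_nat c ^ k * coeff \<Phi> k \<in> \<int>" for k
  proof (cases "k = 0")
    case True then show ?thesis using coeff0 by simp
  next
    case False
    show ?thesis
    proof (cases "k \<le> degree \<Phi>")
      case False then show ?thesis by (simp add: coeff_eq_0)
    next
      case True
      have "dd k dvd c" unfolding c_def using True by (intro dvd_prodI) auto
      then obtain e where e: "c = dd k * e" by (auto elim: dvdE)
      have "of_nat c ^ k * coeff \<Phi> k = of_nat c ^ (k - 1) * of_nat e * (of_nat (dd k) * coeff \<Phi> k)"
        using \<open>k \<noteq> 0\<close> unfolding e by (cases k) (auto simp: algebra_simps)
      moreover have "(of_nat c ^ (k - 1) * of_nat e :: complex) \<in> \<int>" by (intro Ints_mult Ints_power Ints_of_nat)
      ultimately show ?thesis using Ints_mult[OF _ dd(2)[of k]] by metis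
    qed
  qed
  define \<beta> where "\<beta> X = of_nat c * \<theta> X" for X
  define \<Psi> where "\<Psi> = (\<Prod>X\<in>J. [:1, - \<beta> X:])"
  have Psi_eq: "\<Psi> = pcompose \<Phi> [:0, of_nat c:]"
    unfolding \<Psi>_def \<Phi>_def pcompose_prod by (intro prod.cong refl) (simp add: \<beta>_def pcompose_pCons)
  have cPsi: "coeff \<Psi> k \<in> \<int>" for k unfolding Psi_eq coeff_pcompose_linear using cint by simp
  have "fps_of_poly \<Psi> = Phi J \<beta>" unfolding \<Psi>_def fps_of_poly_prod Phi_def by (simp add: fps_of_lin)
  then have "fA \<int> (Phi J \<beta>)" unfolding fA_def using cPsi by (metis fps_of_poly_nth)
  then have PSb1: "PS J \<beta> (Suc n) \<in> \<int>" for n by (intro PS_from_Phi[OF finJ subr_Ints])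
  have PSb: "(\<Sum>X\<in>J. \<beta> X ^ n) \<in> \<int>" for n
  proof (cases n)
    case 0 then show ?thesis by simp
  next
    case (Suc m) then show ?thesis using PSb1[of m] unfolding PS_def by simp
  qed
  have bnz: "\<beta> X \<noteq> 0" if "X \<in> J" for X using that c0 unfolding J_def \<beta>_def by auto
  have refPsi: "reflect_poly \<Psi> = (\<Prod>X\<in>J. [:-\<beta> X, 1:])"
    unfolding \<Psi>_def reflect_poly_prod using bnz by (intro prod.cong refl) (simp add: reflect_lin)
  have Rint: "ints_poly (\<Prod>X\<in>J. [:-\<beta> X, 1:])"
    unfolding refPsi[symmetric] ints_poly_def using cPsi by (auto simp: coeff_reflect_poly)
  have eqb: "(\<Sum>X\<in>J. exp (\<beta> X / of_nat c)) + of_nat q = 0" using eqJ c0 unfolding \<beta>_def by simp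
  show False by (rule hermite[OF finJ bnz c0 q0 eqb PSb Rint])
qed

lemma ints_poly_sum: "(\<And>i. i \<in> S \<Longrightarrow> ints_poly (f i)) \<Longrightarrow> ints_poly (sum f S)"
  unfolding ints_poly_def coeff_sum by (auto intro!: Ints_sum)

lemma ints_poly_prod: "(\<And>i. i \<in> S \<Longrightarrow> ints_poly (f i)) \<Longrightarrow> ints_poly (prod f S)"
proof (induction S rule: infinite_finite_induct)
  case (infinite A) then show ?case by (simp add: ints_poly_def coeff_1)
next
  case empty then show ?case by (simp add: ints_poly_def coeff_1)
next
  case (insert x F) then show ?case by (simp add: ints_poly_mult)
qed

lemma ints_poly_smult: "x \<in> \<int> \<Longrightarrow> ints_poly g \<Longrightarrow> ints_poly (smult x g)"
  unfolding ints_poly_def by (auto intro!: Ints_mult)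

lemma ints_poly_lin: "ints_poly [:of_nat a, 1:]"
  unfolding ints_poly_def by (auto simp: coeff_pCons split: nat.split)

lemma Ints_Rats: "(x::complex) \<in> \<int> \<Longrightarrow> x \<in> \<rat>"
  by (auto elim!: Ints_cases)

lemma indep_pi:
  fixes K :: nat and cc :: "nat \<Rightarrow> int"
  assumes eq: "(\<Sum>i<K. real_of_int (cc i) / (pi + real (Suc i))) = 0"
  shows "\<forall>i<K. cc i = 0"
proof (rule ccontr)
  assume "\<not> (\<forall>i<K. cc i = 0)"
  then obtain i0 where i0: "i0 < K" "cc i0 \<noteq> 0" by auto
  define P :: "complex poly" where
    "P = (\<Sum>i<K. smult (of_int (cc i)) (\<Prod>j\<in>{..<K} - {i}. [:of_nat (Suc j), 1:]))"
  have polyP: "poly P x = (\<Sum>i<K. of_int (cc i) * (\<Prod>j\<in>{..<K} - {i}. of_nat (Suc j) + x))" for x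
    unfolding P_def by (simp add: poly_sum poly_prod)
  have Pint: "ints_poly P" unfolding P_def
    by (intro ints_poly_sum ints_poly_smult ints_poly_prod ints_poly_lin) auto
  have Prat: "coeff P k \<in> \<rat>" for k using Pint unfolding ints_poly_def by (auto intro: Ints_Rats)
  have "P \<noteq> 0"
  proof
    assume "P = 0"
    then have "poly P (- of_nat (Suc i0)) = 0" by simp
    moreover have "poly P (- of_nat (Suc i0)) = of_int (cc i0) * (\<Prod>j\<in>{..<K} - {i0}. of_nat (Suc j) - of_nat (Suc i0))"
    proof -
      have "poly P (- of_nat (Suc i0)) = (\<Sum>i\<in>{i0}. of_int (cc i) * (\<Prod>j\<in>{..<K} - {i}. of_nat (Suc j) + - of_nat (Suc i0)))"
        unfolding polyP
      proof (rule sum.mono_neutral_right)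
        show "\<forall>i\<in>{..<K} - {i0}. of_int (cc i) * (\<Prod>j\<in>{..<K} - {i}. of_nat (Suc j) + - of_nat (Suc i0)) = (0::complex)"
        proof
          fix i assume "i \<in> {..<K} - {i0}"
          then have "i0 \<in> {..<K} - {i}" using i0 by auto
          then show "of_int (cc i) * (\<Prod>j\<in>{..<K} - {i}. of_nat (Suc j) + - of_nat (Suc i0)) = (0::complex)"
            by (subst prod.remove[of _ i0]) auto
        qed
      qed (use i0 in auto)
      then show ?thesis by simp
    qed
    moreover have "(\<Prod>j\<in>{..<K} - {i0}. of_nat (Suc j) - of_nat (Suc i0) :: complex) \<noteq> 0"
      by (subst prod_zero_iff) auto
    ultimately show False using i0 by simp
  qed
  have "poly P (of_real pi) = 0"
  proof -
    define a :: "nat \<Rightarrow> complex" where "a j = of_real pi + of_nat (Suc j)" for j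
    have anz: "a j \<noteq> 0" for j
    proof -
      have "Re (a j) > 0" unfolding a_def using pi_gt_zero by (simp add: add_pos_nonneg)
      then show ?thesis by auto
    qed
    have ceq: "(\<Sum>i<K. of_int (cc i) / a i) = 0"
    proof -
      have "(\<Sum>i<K. of_int (cc i) / a i) = of_real (\<Sum>i<K. real_of_int (cc i) / (pi + real (Suc i)))"
        unfolding a_def by simp
      also have "\<dots> = 0" unfolding eq by simp
      finally show ?thesis .
    qed
    have "poly P (of_real pi) = (\<Sum>i<K. of_int (cc i) * (\<Prod>j\<in>{..<K} - {i}. a j))"
      unfolding polyP a_def by (simp add: add.commute)
    also have "\<dots> = (\<Sum>i<K. of_int (cc i) * ((\<Prod>j<K. a j) / a i))"
    proof (intro sum.cong refl)
      fix i assume "i \<in> {..<K}"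
      then have "(\<Prod>j<K. a j) = a i * (\<Prod>j\<in>{..<K} - {i}. a j)" by (subst prod.remove[of _ i]) auto
      then show "of_int (cc i) * (\<Prod>j\<in>{..<K} - {i}. a j) = of_int (cc i) * ((\<Prod>j<K. a j) / a i)"
        using anz[of i] by simp
    qed
    also have "\<dots> = (\<Prod>j<K. a j) * (\<Sum>i<K. of_int (cc i) / a i)"
      unfolding sum_distrib_left by (intro sum.cong refl) simp
    also have "\<dots> = 0" using ceq by simp
    finally show ?thesis .
  qed
  then show False using pi_transc[OF \<open>P \<noteq> 0\<close> Prat] by simp
qed

lemma sigma1_range: "0 \<le> sigma1 x \<and> sigma1 x \<le> 1"
proof -
  define m where "m = \<lfloor>(x + 1) / 2\<rfloor>"
  have "of_int m \<le> (x + 1) / 2" "(x + 1) / 2 < of_int m + 1" unfolding m_def by linarith+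
  then have "2 * of_int m \<le> x + 1" "x + 1 < 2 * of_int m + 2" by (simp_all add: field_simps)
  then have "\<bar>x - 2 * of_int m\<bar> \<le> 1" by (simp add: abs_le_iff)
  then show ?thesis unfolding sigma1_def m_def by simp
qed

lemma sigma1_int: "sigma1 (x + 2 * of_int h) = sigma1 x"
proof -
  have eq: "(x + 2 * of_int h + 1) / 2 = (x + 1) / 2 + of_int h" by simp
  have "\<lfloor>(x + 2 * of_int h + 1) / 2\<rfloor> = \<lfloor>(x + 1) / 2\<rfloor> + h" by (subst eq) (metis floor_add_int)
  then show ?thesis unfolding sigma1_def by (simp add: algebra_simps)
qed

lemma div_aux: "(a::real) \<noteq> 0 \<Longrightarrow> c / a = 2 * (c * (1 / (2 * a)))"
  by (simp add: field_simps)

lemma theta_indep: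
  fixes K :: nat
  defines "\<theta> \<equiv> \<lambda>i::nat. 1 / (2 * (pi + real (Suc i)))"
  shows "\<not> module.dependent (\<lambda>r. (*) (real_of_int r)) (\<theta> ` {..<K})"
    and "inj_on \<theta> {..<K}"
proof -
  have pos: "pi + real (Suc i) > 0" for i using pi_gt_zero by (simp add: add_pos_nonneg)
  show inj: "inj_on \<theta> {..<K}"
  proof (rule inj_onI)
    fix i j assume "\<theta> i = \<theta> j"
    then have "pi + real (Suc i) = pi + real (Suc j)" unfolding \<theta>_def using pos[of i] pos[of j] by (simp add: field_simps)
    then show "i = j" by simp
  qed
  interpret M: Modules.module "(\<lambda>r. (*) (real_of_int r))"
    by (simp add: Modules.module.intro distrib_left mult.commute)
  show "\<not> M.dependent (\<theta> ` {..<K})"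
  proof
    assume "M.dependent (\<theta> ` {..<K})"
    then obtain t u v where tu: "finite t" "t \<subseteq> \<theta> ` {..<K}" "(\<Sum>v\<in>t. real_of_int (u v) * v) = 0" "v \<in> t" "u v \<noteq> 0"
      unfolding M.dependent_explicit by blast
    define S where "S = {i \<in> {..<K}. \<theta> i \<in> t}"
    have tS: "t = \<theta> ` S" using tu(2) unfolding S_def by auto
    have injS: "inj_on \<theta> S" using inj unfolding S_def by (auto intro: inj_on_subset)
    define cc where "cc i = (if i \<in> S then u (\<theta> i) else 0)" for i
    have "(\<Sum>i<K. real_of_int (cc i) * \<theta> i) = (\<Sum>i\<in>S. real_of_int (u (\<theta> i)) * \<theta> i)"
      unfolding cc_def by (rule sum.mono_neutral_cong_right) (auto simp: S_def)
    also have "\<dots> = (\<Sum>v\<in>t. real_of_int (u v) * v)"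
      unfolding tS by (rule sum.reindex[OF injS, symmetric, unfolded comp_def])
    also have "\<dots> = 0" by (rule tu(3))
    finally have "(\<Sum>i<K. real_of_int (cc i) * \<theta> i) = 0" .
    then have "(\<Sum>i<K. real_of_int (cc i) / (pi + real (Suc i))) = 0"
    proof -
      assume h: "(\<Sum>i<K. real_of_int (cc i) * \<theta> i) = 0"
      have "(\<Sum>i<K. real_of_int (cc i) / (pi + real (Suc i))) = 2 * (\<Sum>i<K. real_of_int (cc i) * \<theta> i)"
        unfolding sum_distrib_left \<theta>_def by (intro sum.cong refl div_aux pos[THEN dual_order.strict_implies_not_eq])
      then show ?thesis using h by simp
    qed
    then have "\<forall>i<K. cc i = 0" by (rule indep_pi)
    moreover obtain i where "i \<in> S" "v = \<theta> i" using tu(4) tS by auto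
    moreover have "i < K" using \<open>i \<in> S\<close> unfolding S_def by auto
    ultimately show False using tu(5) unfolding cc_def by auto
  qed
qed

theorem proposition7:
  fixes K :: nat
  assumes "K \<ge> 1"
  shows "{(\<lambda>k\<in>{1..K}. sigma1 (w / (pi + real k))) | w::real. True}
           \<subseteq> PiE {1..K} (\<lambda>_. {0..1::real})
       \<and> (\<forall>y \<in> PiE {1..K} (\<lambda>_. {0..1::real}). \<forall>\<epsilon>>0. \<exists>w::real.
            \<forall>k\<in>{1..K}. \<bar>sigma1 (w / (pi + real k)) - y k\<bar> < \<epsilon>)"
proof (intro conjI ballI allI impI)
  show "{(\<lambda>k\<in>{1..K}. sigma1 (w / (pi + real k))) | w::real. True} \<subseteq> PiE {1..K} (\<lambda>_. {0..1::real})"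
    using sigma1_range by auto
next
  fix y :: "nat \<Rightarrow> real" and \<epsilon> :: real
  assume y: "y \<in> PiE {1..K} (\<lambda>_. {0..1::real})" and e: "\<epsilon> > 0"
  define \<theta> where "\<theta> = (\<lambda>i::nat. 1 / (2 * (pi + real (Suc i))))"
  define \<eta> where "\<eta> = min (\<epsilon> / 2) (1 / 4)"
  have eta: "\<eta> > 0" "\<eta> \<le> \<epsilon> / 2" "\<eta> \<le> 1 / 4" using e unfolding \<eta>_def by auto
  define z where "z k = max \<eta> (min (1 - \<eta>) (y k))" for k
  define \<alpha> where "\<alpha> i = z (Suc i) / 2" for i
  have e2: "\<eta> / 2 > 0" using eta by simp
  obtain t h where th: "\<And>i. i < K \<Longrightarrow> \<bar>t * \<theta> i - real_of_int (h i) - \<alpha> i\<bar> < \<eta> / 2"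
    using Kronecker_thm_1[where \<alpha> = \<alpha> and \<theta> = \<theta> and n = K and \<epsilon> = "\<eta> / 2",
        OF theta_indep(1)[of K, folded \<theta>_def] theta_indep(2)[of K, folded \<theta>_def] e2] by blast
  show "\<exists>w. \<forall>k\<in>{1..K}. \<bar>sigma1 (w / (pi + real k)) - y k\<bar> < \<epsilon>"
  proof (intro exI ballI)
    fix k assume k: "k \<in> {1..K}"
    define i where "i = k - 1"
    have ik: "i < K" "Suc i = k" using k unfolding i_def by auto
    define \<delta> where "\<delta> = t * \<theta> i - real_of_int (h i) - \<alpha> i"
    have d: "\<bar>\<delta>\<bar> < \<eta> / 2" using th[OF ik(1)] unfolding \<delta>_def .
    have pos: "pi + real k > 0" using pi_gt_zero by (simp add: add_pos_nonneg)
    have "t / (pi + real k) = 2 * (t * \<theta> i)" unfolding \<theta>_def using ik pos by (simp add: field_simps)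
    also have "\<dots> = (z k + 2 * \<delta>) + 2 * real_of_int (h i)"
      unfolding \<delta>_def \<alpha>_def using ik by (simp add: algebra_simps)
    finally have w: "t / (pi + real k) = (z k + 2 * \<delta>) + 2 * real_of_int (h i)" .
    have yk: "0 \<le> y k" "y k \<le> 1" using y k by (auto simp: PiE_iff)
    have zk: "\<eta> \<le> z k" "z k \<le> 1 - \<eta>" "\<bar>z k - y k\<bar> \<le> \<eta>"
      unfolding z_def using eta yk by (auto simp: max_def min_def)
    have "sigma1 (t / (pi + real k)) = sigma1 (z k + 2 * \<delta>)" unfolding w by (rule sigma1_int)
    also have "\<dots> = \<bar>z k + 2 * \<delta>\<bar>" using zk d eta by (intro sigma1_abs) auto
    also have "\<dots> = z k + 2 * \<delta>" using zk d by auto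
    finally have "sigma1 (t / (pi + real k)) = z k + 2 * \<delta>" .
    then show "\<bar>sigma1 (t / (pi + real k)) - y k\<bar> < \<epsilon>" using zk d eta by auto
  qed
qed

end
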